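(* Let $\mathcal{W}$ be the weight space of an MLP and $G$ its (finite) neuron-permutation group acting linearly and orthonormally on $\mathcal{W}$ (see context). Let $q_\theta(\boldsymbol{\omega})$ be a probability density on $\mathcal{W}$ and $q_\theta^G(\boldsymbol{\omega})=\frac{1}{|G|}\sum_{g\in G}q_\theta(g^{-1}\cdot\boldsymbol{\omega})$. For an integer $K\ge1$ define $$H^K(\theta)=\mathbb{E}\left[-\log\left(\frac{1}{K}\left(q_\theta(\boldsymbol{\omega})+\sum_{j=1}^{K-1}q_\theta(g_j^{-1}\cdot\boldsymbol{\omega})\right)\right)\right],$$ where the expectation is over $\boldsymbol{\omega}\sim q_\theta$ and $g_1,\dots,g_{K-1}\sim\mathrm{uniform}(G)$ i.i.d. (independent of $\boldsymbol{\omega}$). Then (assuming the entropies involved are finite) $H^K(\theta)\le H(q_\theta^G)$ and $\lim_{K\to\infty}H^K(\theta)=H(q_\theta^G)$, where $H$ denotes differential entropy.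
   Context: The MLP weight space is $\mathcal{W}=\bigoplus_{l=1}^L(\mathbb{R}^{d_l\times d_{l-1}}\oplus\mathbb{R}^{d_l})$ with $\boldsymbol{\omega}=(\mathbf{W}_1,\dots,\mathbf{W}_L,\mathbf{b}_1,\dots,\mathbf{b}_L)$ and Euclidean norm, and $G=S_{d_1}\times\dots\times S_{d_{L-1}}$. For $g=(\tau_1,\dots,\tau_{L-1})$ with permutation matrices $\mathbf{P}_{\tau_l}$, $g\cdot\boldsymbol{\omega}$ has $\mathbf{W}_1'=\mathbf{P}_{\tau_1}^\top\mathbf{W}_1$, $\mathbf{b}_1'=\mathbf{P}_{\tau_1}^\top\mathbf{b}_1$; $\mathbf{W}_l'=\mathbf{P}_{\tau_l}^\top\mathbf{W}_l\mathbf{P}_{\tau_{l-1}}$, $\mathbf{b}_l'=\mathbf{P}_{\tau_l}^\top\mathbf{b}_l$ for $2\le l\le L-1$; $\mathbf{W}_L'=\mathbf{W}_L\mathbf{P}_{\tau_{L-1}}$, $\mathbf{b}_L'=\mathbf{b}_L$. *)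

theory Defs
  imports "HOL-Probability.Probability" "HOL-Combinatorics.Permutations"
begin

text \<open>Widths ds = [d_0, d_1, ..., d_L] (so L = length ds - 1).
  Coordinates of the MLP weight space: Wt l i j is entry (i,j) of W_l (1 <= l <= L,
  i < d_l, j < d_(l-1)); Bs l i is entry i of b_l. Indices are 0-based within a layer.\<close>

datatype widx = Wt nat nat nat | Bs nat nat

definition wIdx :: "nat list \<Rightarrow> widx set" where
  "wIdx ds = {Wt l i j | l i j. 1 \<le> l \<and> l < length ds \<and> i < ds ! l \<and> j < ds ! (l - 1)}
           \<union> {Bs l i | l i. 1 \<le> l \<and> l < length ds \<and> i < ds ! l}"

definition wspace :: "nat list \<Rightarrow> (widx \<Rightarrow> real) measure" where
  "wspace ds = PiM (wIdx ds) (\<lambda>_. lborel)"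

text \<open>G = S_{d_1} x ... x S_{d_(L-1)}: an element is a family tau with tau l a permutation
  of {0..<d_l} for 1 <= l <= L-1 and tau l = id otherwise (so tau_0 = tau_L = id).\<close>
definition permgroup :: "nat list \<Rightarrow> (nat \<Rightarrow> nat \<Rightarrow> nat) set" where
  "permgroup ds = {\<tau>. (\<forall>l. 1 \<le> l \<and> l < length ds - 1 \<longrightarrow> \<tau> l permutes {..<ds ! l})
                     \<and> (\<forall>l. \<not> (1 \<le> l \<and> l < length ds - 1) \<longrightarrow> \<tau> l = id)}"

text \<open>Action g . omega, with permutation matrices (P_tau)_{ij} = [i = tau j]:
  W_l' = P_{tau_l}^T W_l P_{tau_(l-1)} has entries W_l (tau_l i) (tau_(l-1) j),
  b_l' = P_{tau_l}^T b_l has entries b_l (tau_l i); tau_0 = tau_L = id.\<close>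
definition act :: "(nat \<Rightarrow> nat \<Rightarrow> nat) \<Rightarrow> (widx \<Rightarrow> real) \<Rightarrow> (widx \<Rightarrow> real)" where
  "act \<tau> \<omega> = (\<lambda>k. case k of
       Wt l i j \<Rightarrow> \<omega> (Wt l (\<tau> l i) (\<tau> (l - 1) j))
     | Bs l i \<Rightarrow> \<omega> (Bs l (\<tau> l i)))"

definition ginv :: "(nat \<Rightarrow> nat \<Rightarrow> nat) \<Rightarrow> (nat \<Rightarrow> nat \<Rightarrow> nat)" where
  "ginv \<tau> = (\<lambda>l. inv (\<tau> l))"

definition symdens :: "nat list \<Rightarrow> ((widx \<Rightarrow> real) \<Rightarrow> real) \<Rightarrow> (widx \<Rightarrow> real) \<Rightarrow> real" where
  "symdens ds q \<omega> = (1 / real (card (permgroup ds))) *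
      (\<Sum>g\<in>permgroup ds. q (act (ginv g) \<omega>))"

definition diff_entropy :: "'a measure \<Rightarrow> ('a \<Rightarrow> real) \<Rightarrow> real" where
  "diff_entropy M p = - (\<integral>x. p x * ln (p x) \<partial>M)"

definition gtuples :: "nat list \<Rightarrow> nat \<Rightarrow> (nat \<Rightarrow> (nat \<Rightarrow> nat \<Rightarrow> nat)) set" where
  "gtuples ds K = PiE {1..K - 1} (\<lambda>_. permgroup ds)"

definition HK_integrand :: "nat list \<Rightarrow> ((widx \<Rightarrow> real) \<Rightarrow> real) \<Rightarrow> nat
      \<Rightarrow> (nat \<Rightarrow> (nat \<Rightarrow> nat \<Rightarrow> nat)) \<Rightarrow> (widx \<Rightarrow> real) \<Rightarrow> real" where
  "HK_integrand ds q K gs \<omega> =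
     - ln ((1 / real K) * (q \<omega> + (\<Sum>j=1..K - 1. q (act (ginv (gs j)) \<omega>))))"

text \<open>H^K(theta): expectation over omega ~ q (density q w.r.t. Lebesgue measure) and
  g_1..g_(K-1) iid uniform on G (a uniform average over G^(K-1)).\<close>
definition HK :: "nat list \<Rightarrow> ((widx \<Rightarrow> real) \<Rightarrow> real) \<Rightarrow> nat \<Rightarrow> real" where
  "HK ds q K = (\<integral>\<omega>. q \<omega> * ((1 / real (card (gtuples ds K))) *
        (\<Sum>gs\<in>gtuples ds K. HK_integrand ds q K gs \<omega>)) \<partial>wspace ds)"

end

theory Submission
  imports Defs
begin

lemma swap_sum:
  fixes K :: nat and G :: "'g set" and p :: "'g \<Rightarrow> real"
  assumes j: "j \<in> {1..K-1}"
    and fsym: "\<And>h gs. h \<in> G \<Longrightarrow> gs \<in> PiE {1..K-1} (\<lambda>_. G) \<Longrightarrow> f (gs j) (gs(j:=h)) = f h gs"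
  shows "(\<Sum>h\<in>G. \<Sum>gs\<in>PiE {1..K-1} (\<lambda>_. G). p h * f h gs)
       = (\<Sum>h\<in>G. \<Sum>gs\<in>PiE {1..K-1} (\<lambda>_. G). p (gs j) * f h gs)"
proof -
  let ?T = "PiE {1..K-1} (\<lambda>_. G)"
  let ?i = "\<lambda>(h, gs). (gs j, gs(j:=h))"
  have "(\<Sum>h\<in>G. \<Sum>gs\<in>?T. p h * f h gs) = (\<Sum>(h,gs)\<in>G \<times> ?T. p h * f h gs)"
    by (rule sum.cartesian_product)
  also have "\<dots> = (\<Sum>(h,gs)\<in>G \<times> ?T. p (gs j) * f h gs)"
  proof (rule sum.reindex_bij_witness[of _ ?i ?i])
    fix a assume a: "a \<in> G \<times> ?T"
    then show "?i (?i a) = a" by (auto split: prod.splits)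
    show "?i a \<in> G \<times> ?T" using a j by (auto split: prod.splits simp: PiE_iff extensional_def)
    show "(case ?i a of (h, gs) \<Rightarrow> p (gs j) * f h gs) = (case a of (h, gs) \<Rightarrow> p h * f h gs)"
      using a fsym by (auto split: prod.splits)
  qed (use j in \<open>auto split: prod.splits simp: PiE_iff extensional_def\<close>)
  also have "\<dots> = (\<Sum>h\<in>G. \<Sum>gs\<in>?T. p (gs j) * f h gs)"
    by (rule sum.cartesian_product[symmetric])
  finally show ?thesis .
qed

lemma S_sym:
  fixes p :: "'g \<Rightarrow> real" and K :: nat
  assumes j: "j \<in> {1..K-1}"
  shows "p (gs j) + (\<Sum>i=1..K-1. p ((gs(j:=h)) i)) = p h + (\<Sum>i=1..K-1. p (gs i))"
proof -
  have f: "finite {1..K-1}" by simp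
  have "(\<Sum>i=1..K-1. p ((gs(j:=h)) i)) = p ((gs(j:=h)) j) + (\<Sum>i\<in>{1..K-1}-{j}. p ((gs(j:=h)) i))"
    by (rule sum.remove[OF f j])
  also have "p ((gs(j:=h)) j) = p h" by simp
  also have "(\<Sum>i\<in>{1..K-1}-{j}. p ((gs(j:=h)) i)) = (\<Sum>i\<in>{1..K-1}-{j}. p (gs i))"
    by (rule sum.cong) auto
  finally have 1: "(\<Sum>i=1..K-1. p ((gs(j:=h)) i)) = p h + (\<Sum>i\<in>{1..K-1}-{j}. p (gs i))" .
  have 2: "(\<Sum>i=1..K-1. p (gs i)) = p (gs j) + (\<Sum>i\<in>{1..K-1}-{j}. p (gs i))"
    using sum.remove[OF f j] by simp
  show ?thesis using 1 2 by simp
qed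

lemma KZ:
  fixes G :: "'g set" and p :: "'g \<Rightarrow> real" and K :: nat and \<psi> :: "real \<Rightarrow> real"
  assumes K: "K \<ge> 1"
  defines "T \<equiv> PiE {1..K-1} (\<lambda>_. G)"
  defines "S \<equiv> \<lambda>h gs. p h + (\<Sum>j=1..K-1. p (gs j))"
  shows "(\<Sum>h\<in>G. \<Sum>gs\<in>T. S h gs * \<psi> (S h gs)) = real K * (\<Sum>h\<in>G. \<Sum>gs\<in>T. p h * \<psi> (S h gs))"
proof -
  let ?Z = "(\<Sum>h\<in>G. \<Sum>gs\<in>T. p h * \<psi> (S h gs))"
  have sw: "(\<Sum>h\<in>G. \<Sum>gs\<in>T. p (gs j) * \<psi> (S h gs)) = ?Z" if j: "j \<in> {1..K-1}" for j
    unfolding T_def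
  proof (rule swap_sum[OF j, where f="\<lambda>h gs. \<psi> (S h gs)", symmetric])
    fix h gs
    have "S (gs j) (gs(j:=h)) = S h gs" unfolding S_def by (rule S_sym[OF j])
    then show "\<psi> (S (gs j) (gs(j:=h))) = \<psi> (S h gs)" by simp
  qed
  have pw: "S h gs * \<psi> (S h gs) = p h * \<psi> (S h gs) + (\<Sum>j=1..K-1. p (gs j) * \<psi> (S h gs))" for h gs
    unfolding sum_distrib_right[symmetric] by (simp only: S_def distrib_right)
  have "(\<Sum>h\<in>G. \<Sum>gs\<in>T. S h gs * \<psi> (S h gs))
      = (\<Sum>h\<in>G. \<Sum>gs\<in>T. p h * \<psi> (S h gs) + (\<Sum>j=1..K-1. p (gs j) * \<psi> (S h gs)))"
    by (simp only: pw)
  also have "\<dots> = ?Z + (\<Sum>h\<in>G. \<Sum>gs\<in>T. \<Sum>j=1..K-1. p (gs j) * \<psi> (S h gs))"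
    by (simp only: sum.distrib)
  also have "(\<Sum>h\<in>G. \<Sum>gs\<in>T. \<Sum>j=1..K-1. p (gs j) * \<psi> (S h gs))
      = (\<Sum>h\<in>G. \<Sum>j=1..K-1. \<Sum>gs\<in>T. p (gs j) * \<psi> (S h gs))"
    by (rule sum.cong[OF refl], rule sum.swap)
  also have "\<dots> = (\<Sum>j=1..K-1. \<Sum>h\<in>G. \<Sum>gs\<in>T. p (gs j) * \<psi> (S h gs))"
    by (rule sum.swap)
  also have "\<dots> = (\<Sum>j=1..K-1. ?Z)"
    by (rule sum.cong[OF refl]) (rule sw, simp)
  also have "?Z + \<dots> = real K * ?Z" using K by (simp add: algebra_simps of_nat_diff)
  finally show ?thesis .
qed

lemma xlnx_tangent:
  fixes x m :: real
  assumes "x \<ge> 0" "m > 0"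
  shows "m * ln m + (1 + ln m) * (x - m) \<le> x * ln x"
proof (cases "x = 0")
  case True then show ?thesis using assms by (simp add: algebra_simps)
next
  case False
  then have x: "x > 0" using assms by simp
  have "ln (m / x) \<le> m / x - 1" using x assms by (intro ln_le_minus_one) simp
  then have "ln m - ln x \<le> m / x - 1" using x assms by (simp add: ln_div)
  then have "x * (ln m - ln x) \<le> x * (m / x - 1)" using x by (intro mult_left_mono) auto
  then show ?thesis using x by (simp add: algebra_simps)
qed

lemma ln_tangent:
  fixes y B :: real
  assumes "y > 0" "B > 0"
  shows "- ln B - (y - B) / B \<le> - ln y"
proof -
  have "ln (y / B) \<le> y / B - 1" using assms by (intro ln_le_minus_one) simp
  then have "ln y - ln B \<le> y / B - 1" using assms by (simp add: ln_div)
  moreover have "(y - B) / B = y / B - 1" using assms by (simp add: field_simps)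
  ultimately show ?thesis by simp
qed

lemma sum_comp_j:
  fixes G :: "'g set" and p :: "'g \<Rightarrow> real" and K :: nat
  assumes fin: "finite G" and ne: "G \<noteq> {}" and j: "j \<in> {1..K-1}"
  shows "(\<Sum>gs\<in>PiE {1..K-1} (\<lambda>_. G). p (gs j)) = real (card (PiE {1..K-1} (\<lambda>_. G))) * ((\<Sum>g\<in>G. p g) / card G)"
proof -
  let ?T = "PiE {1..K-1} (\<lambda>_. G)"
  have "(\<Sum>h\<in>G. \<Sum>gs\<in>?T. p h * 1) = (\<Sum>h\<in>G. \<Sum>gs\<in>?T. p (gs j) * 1)"
    by (rule swap_sum[OF j, where f="\<lambda>_ _. 1"]) simp
  then have "real (card ?T) * (\<Sum>g\<in>G. p g) = real (card G) * (\<Sum>gs\<in>?T. p (gs j))"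
    by (simp add: sum_distrib_left sum_distrib_right)
  moreover have "card G > 0" using fin ne by (simp add: card_gt_0_iff)
  ultimately show ?thesis by (simp add: field_simps)
qed

lemma comb_bounds:
  fixes G :: "'g set" and p :: "'g \<Rightarrow> real" and K :: nat
  assumes fin: "finite G" and ne: "G \<noteq> {}" and pnn: "\<forall>g\<in>G. p g \<ge> 0" and K: "K \<ge> 1"
  defines "T \<equiv> PiE {1..K-1} (\<lambda>_. G)"
  defines "S \<equiv> \<lambda>h gs. p h + (\<Sum>j=1..K-1. p (gs j))"
  defines "m \<equiv> (\<Sum>g\<in>G. p g) / card G"
  shows "(\<Sum>h\<in>G. \<Sum>gs\<in>T. p h * - ln ((1 / real K) * S h gs)) \<le> - (real (card G) * real (card T)) * (m * ln m)"
    and "(\<Sum>h\<in>G. \<Sum>gs\<in>T. p h * - ln ((1 / real K) * S h gs))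
          \<ge> - (real (card G) * real (card T)) * (m * ln m) - (real (card G) * real (card T)) * m * ln (1 + real (card G) / real K)"
proof -
  let ?Z = "(\<Sum>h\<in>G. \<Sum>gs\<in>T. p h * - ln ((1 / real K) * S h gs))"
  let ?N = "real (card G) * real (card T)"
  have finT: "finite T" unfolding T_def using fin by (simp add: finite_PiE)
  have cG: "card G > 0" using fin ne by (simp add: card_gt_0_iff)
  have Kpos: "real K > 0" using K by simp
  have gsG: "gs j \<in> G" if "gs \<in> T" "j \<in> {1..K-1}" for gs j using that unfolding T_def by auto
  have Snn: "S h gs \<ge> p h" if "gs \<in> T" for h gs
    unfolding S_def using gsG[OF that] pnn by (auto intro!: sum_nonneg)
  have sumnn: "(\<Sum>g\<in>G. p g) \<ge> 0" using pnn by (simp add: sum_nonneg)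
  have mnn: "m \<ge> 0" unfolding m_def using sumnn by simp
  have ph_le: "p h \<le> real (card G) * m" if "h \<in> G" for h
  proof -
    have "p h \<le> (\<Sum>g\<in>G. p g)" using that fin pnn by (intro member_le_sum) auto
    then show ?thesis unfolding m_def using cG by simp
  qed
  have KZ1: "(\<Sum>h\<in>G. \<Sum>gs\<in>T. S h gs * (\<lambda>_. 1::real) (S h gs)) = real K * (\<Sum>h\<in>G. \<Sum>gs\<in>T. p h * (\<lambda>_. 1) (S h gs))"
    unfolding T_def S_def by (rule KZ[OF K])
  have sumS: "(\<Sum>h\<in>G. \<Sum>gs\<in>T. (1 / real K) * S h gs) = ?N * m"
  proof -
    have "(\<Sum>h\<in>G. \<Sum>gs\<in>T. (1 / real K) * S h gs) = (1 / real K) * (\<Sum>h\<in>G. \<Sum>gs\<in>T. S h gs)"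
      by (simp add: sum_distrib_left)
    also have "\<dots> = (\<Sum>h\<in>G. \<Sum>gs\<in>T. p h)" using KZ1 Kpos by simp
    also have "\<dots> = real (card T) * (\<Sum>g\<in>G. p g)" by (simp add: sum_distrib_left)
    also have "\<dots> = ?N * m" unfolding m_def using cG by simp
    finally show ?thesis .
  qed
  have zero_case: "?Z = 0" if "m = 0"
  proof -
    have "(\<Sum>g\<in>G. p g) = 0" using that cG unfolding m_def by simp
    then have "\<forall>g\<in>G. p g = 0" using fin pnn sum_nonneg_eq_0_iff by blast
    then show ?thesis by simp
  qed
  show "?Z \<le> - ?N * (m * ln m)"
  proof (cases "m = 0")
    case True then show ?thesis using zero_case by simp
  next
    case False
    then have mpos: "m > 0" using mnn by simp
    have "real K * ?Z = (\<Sum>h\<in>G. \<Sum>gs\<in>T. S h gs * (\<lambda>x. - ln ((1 / real K) * x)) (S h gs))"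
      unfolding T_def S_def by (rule KZ[OF K, symmetric])
    also have "\<dots> = real K * (\<Sum>h\<in>G. \<Sum>gs\<in>T. - (((1 / real K) * S h gs) * ln ((1 / real K) * S h gs)))"
      using Kpos by (simp add: sum_distrib_left sum_negf)
    finally have Zeq: "?Z = (\<Sum>h\<in>G. \<Sum>gs\<in>T. - (((1 / real K) * S h gs) * ln ((1 / real K) * S h gs)))"
      using Kpos by simp
    also have "\<dots> \<le> (\<Sum>h\<in>G. \<Sum>gs\<in>T. - (m * ln m + (1 + ln m) * ((1 / real K) * S h gs - m)))"
    proof (intro sum_mono)
      fix h gs assume h: "h \<in> G" and gs: "gs \<in> T"
      have "(1 / real K) * S h gs \<ge> 0" using Snn[OF gs, of h] pnn h Kpos by (intro mult_nonneg_nonneg) force+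
      from xlnx_tangent[OF this mpos] show "- (((1 / real K) * S h gs) * ln ((1 / real K) * S h gs)) \<le> - (m * ln m + (1 + ln m) * ((1 / real K) * S h gs - m))"
        by simp
    qed
    also have "\<dots> = - ?N * (m * ln m) - (1 + ln m) * ((\<Sum>h\<in>G. \<Sum>gs\<in>T. (1 / real K) * S h gs) - ?N * m)"
      by (simp add: sum_negf sum.distrib sum_subtractf sum_distrib_left algebra_simps)
    also have "\<dots> = - ?N * (m * ln m)" using sumS by simp
    finally show ?thesis .
  qed
  show "?Z \<ge> - ?N * (m * ln m) - ?N * m * ln (1 + real (card G) / real K)"
  proof (cases "m = 0")
    case True then show ?thesis using zero_case by simp
  next
    case False
    then have mpos: "m > 0" using mnn by simp
    let ?c = "ln m + ln (1 + real (card G) / real K)"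
    have "?Z \<ge> (\<Sum>h\<in>G. - real (card T) * ?c * p h)"
    proof (intro sum_mono)
      fix h assume h: "h \<in> G"
      show "- real (card T) * ?c * p h \<le> (\<Sum>gs\<in>T. p h * - ln ((1 / real K) * S h gs))"
      proof (cases "p h = 0")
        case True then show ?thesis by simp
      next
        case False
        then have php: "p h > 0" using pnn h by force
        have ypos: "(1 / real K) * S h gs > 0" if "gs \<in> T" for gs
          using Snn[OF that, of h] php Kpos by simp
        have cT: "card T > 0" using finT ypos
          unfolding T_def by (simp add: card_gt_0_iff PiE_eq_empty_iff ne)
        define B where "B = (\<Sum>gs\<in>T. (1 / real K) * S h gs) / real (card T)"
        have sumSh: "(\<Sum>gs\<in>T. S h gs) = real (card T) * p h + real (K - 1) * (real (card T) * m)"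
        proof -
          have "(\<Sum>gs\<in>T. S h gs) = real (card T) * p h + (\<Sum>j=1..K-1. \<Sum>gs\<in>T. p (gs j))"
            unfolding S_def by (simp add: sum.distrib sum.swap[of _ T])
          also have "(\<Sum>j=1..K-1. \<Sum>gs\<in>T. p (gs j)) = (\<Sum>j=1..K-1. real (card T) * m)"
            unfolding T_def m_def by (rule sum.cong[OF refl]) (rule sum_comp_j[OF fin ne])
          finally show ?thesis by simp
        qed
        have Beq: "B = (p h + real (K - 1) * m) / real K"
        proof -
          have "(\<Sum>gs\<in>T. (1 / real K) * S h gs) = (1 / real K) * (\<Sum>gs\<in>T. S h gs)"
            by (rule sum_distrib_left[symmetric])
          then have "B = (1 / real K) * (real (card T) * p h + real (K - 1) * (real (card T) * m)) / real (card T)"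
            unfolding B_def sumSh by simp
          also have "\<dots> = (p h + real (K - 1) * m) / real K" using cT Kpos by (simp add: field_simps)
          finally show ?thesis .
        qed
        have Bpos: "B > 0" unfolding Beq using php mpos Kpos by (simp add: add_pos_nonneg)
        have "B \<le> m * (1 + real (card G) / real K)"
        proof -
          have "p h + real (K - 1) * m \<le> real (card G) * m + real K * m"
            using ph_le[OF h] mpos K by (intro add_mono) (auto simp: of_nat_diff intro!: mult_right_mono)
          then have "(p h + real (K - 1) * m) / real K \<le> (real (card G) * m + real K * m) / real K"
            using Kpos by (intro divide_right_mono) auto
          also have "\<dots> = m * (1 + real (card G) / real K)" using Kpos by (simp add: field_simps)
          finally show ?thesis unfolding Beq .
        qed
        then have lnB: "ln B \<le> ?c"
        proof -
          have pos2: "1 + real (card G) / real K > 0" using Kpos by (simp add: add_pos_nonneg)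
          have "ln B \<le> ln (m * (1 + real (card G) / real K))"
            using Bpos \<open>B \<le> _\<close> by simp
          also have "\<dots> = ?c" using mpos pos2 by (simp add: ln_mult)
          finally show ?thesis .
        qed
        have "(\<Sum>gs\<in>T. - ln ((1 / real K) * S h gs)) \<ge> (\<Sum>gs\<in>T. - ln B - ((1 / real K) * S h gs - B) / B)"
          by (intro sum_mono ln_tangent ypos Bpos)
        also have "(\<Sum>gs\<in>T. - ln B - ((1 / real K) * S h gs - B) / B) = - real (card T) * ln B"
        proof -
          let ?Y = "(\<Sum>gs\<in>T. (1 / real K) * S h gs)"
          have "(\<Sum>gs\<in>T. - ln B - ((1 / real K) * S h gs - B) / B) = - real (card T) * ln B - (\<Sum>gs\<in>T. ((1 / real K) * S h gs - B)) / B"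
            by (simp add: sum_subtractf sum_divide_distrib[symmetric])
          also have "(\<Sum>gs\<in>T. ((1 / real K) * S h gs - B)) = ?Y - real (card T) * B"
            by (simp add: sum_subtractf)
          also have "?Y - real (card T) * B = 0" unfolding B_def using cT by simp
          finally show ?thesis by simp
        qed
        finally have "(\<Sum>gs\<in>T. - ln ((1 / real K) * S h gs)) \<ge> - real (card T) * ?c"
        proof -
          have "real (card T) * ln B \<le> real (card T) * ?c" using lnB by (intro mult_left_mono) auto
          then show "- real (card T) * ln B \<le> (\<Sum>gs\<in>T. - ln ((1 / real K) * S h gs)) \<Longrightarrow> ?thesis"
            by linarith
        qed
        then have "p h * (\<Sum>gs\<in>T. - ln ((1 / real K) * S h gs)) \<ge> p h * (- real (card T) * ?c)"
          using php by (intro mult_left_mono) auto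
        then show ?thesis by (simp add: sum_distrib_left algebra_simps)
      qed
    qed
    also have "(\<Sum>h\<in>G. - real (card T) * ?c * p h) = - real (card T) * ?c * (real (card G) * m)"
    proof -
      have "real (card G) * m = (\<Sum>g\<in>G. p g)" unfolding m_def using cG by simp
      then show ?thesis by (simp only: sum_negf sum_distrib_left[symmetric])
    qed
    finally show ?thesis by (simp add: algebra_simps)
  qed
qed

lemma distr_reindex:
  fixes \<sigma> :: "'i \<Rightarrow> 'i"
  assumes fin: "finite I" and bij: "bij_betw \<sigma> I I" and out: "\<And>k. k \<notin> I \<Longrightarrow> \<sigma> k \<notin> I"
  shows "(\<lambda>\<omega>. \<omega> \<circ> \<sigma>) \<in> PiM I (\<lambda>_. lborel::real measure) \<rightarrow>\<^sub>M PiM I (\<lambda>_. lborel)"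
    and "distr (PiM I (\<lambda>_. lborel::real measure)) (PiM I (\<lambda>_. lborel)) (\<lambda>\<omega>. \<omega> \<circ> \<sigma>) = PiM I (\<lambda>_. lborel)"
proof -
  interpret product_sigma_finite "\<lambda>_. lborel::real measure" by unfold_locales
  have inI: "\<sigma> i \<in> I" if "i \<in> I" for i using bij that by (auto simp: bij_betw_def)
  have "(\<lambda>\<omega> i. \<omega> (\<sigma> i)) \<in> PiM I (\<lambda>_. lborel::real measure) \<rightarrow>\<^sub>M PiM I (\<lambda>_. lborel)"
  proof (rule measurable_PiM_single')
    fix i assume "i \<in> I"
    then show "(\<lambda>\<omega>. \<omega> (\<sigma> i)) \<in> PiM I (\<lambda>_. lborel) \<rightarrow>\<^sub>M lborel"
      using inI by (simp add: measurable_component_singleton)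
  next
    show "(\<lambda>\<omega> i. \<omega> (\<sigma> i)) \<in> space (PiM I (\<lambda>_. lborel::real measure)) \<rightarrow> (\<Pi>\<^sub>E i\<in>I. space lborel)"
      using out by (auto simp: space_PiM PiE_def extensional_def)
  qed
  then show meas: "(\<lambda>\<omega>. \<omega> \<circ> \<sigma>) \<in> PiM I (\<lambda>_. lborel::real measure) \<rightarrow>\<^sub>M PiM I (\<lambda>_. lborel)"
    by (simp add: comp_def)
  let ?s = "inv_into I \<sigma>"
  have s1: "?s (\<sigma> i) = i" if "i \<in> I" for i using bij that by (simp add: bij_betw_def inv_into_f_f)
  have s2: "\<sigma> (?s k) = k" if "k \<in> I" for k using bij that by (simp add: bij_betw_def f_inv_into_f)
  have sI: "?s k \<in> I" if "k \<in> I" for k using bij that by (metis bij_betw_def inv_into_into)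
  show "distr (PiM I (\<lambda>_. lborel::real measure)) (PiM I (\<lambda>_. lborel)) (\<lambda>\<omega>. \<omega> \<circ> \<sigma>) = PiM I (\<lambda>_. lborel)"
  proof (rule PiM_eqI[OF fin])
    show "sets (distr (PiM I (\<lambda>_. lborel::real measure)) (PiM I (\<lambda>_. lborel)) (\<lambda>\<omega>. \<omega> \<circ> \<sigma>)) = sets (PiM I (\<lambda>_. lborel))"
      by simp
  next
    fix A :: "'i \<Rightarrow> real set" assume A: "\<And>i. i \<in> I \<Longrightarrow> A i \<in> sets lborel"
    have pre: "(\<lambda>\<omega>. \<omega> \<circ> \<sigma>) -` Pi\<^sub>E I A \<inter> space (PiM I (\<lambda>_. lborel::real measure)) = Pi\<^sub>E I (\<lambda>k. A (?s k))"
    proof (intro set_eqI iffI)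
      fix \<omega> assume "\<omega> \<in> (\<lambda>\<omega>. \<omega> \<circ> \<sigma>) -` Pi\<^sub>E I A \<inter> space (PiM I (\<lambda>_. lborel::real measure))"
      then have 1: "\<forall>i\<in>I. \<omega> (\<sigma> i) \<in> A i" and 2: "\<omega> \<in> extensional I"
        by (auto simp: space_PiM PiE_def)
      show "\<omega> \<in> Pi\<^sub>E I (\<lambda>k. A (?s k))"
      proof (rule PiE_I)
        fix k assume "k \<notin> I" then show "\<omega> k = undefined" using 2 by (simp add: extensional_def)
      next
        fix k assume k: "k \<in> I"
        have "\<omega> (\<sigma> (?s k)) \<in> A (?s k)" using 1 sI[OF k] by blast
        then show "\<omega> k \<in> A (?s k)" using s2[OF k] by simp
      qed
    next
      fix \<omega> assume w: "\<omega> \<in> Pi\<^sub>E I (\<lambda>k. A (?s k))"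
      then have 1: "\<forall>k\<in>I. \<omega> k \<in> A (?s k)" and 2: "\<omega> \<in> extensional I" by (auto simp: PiE_def)
      have "\<omega> \<circ> \<sigma> \<in> Pi\<^sub>E I A"
      proof (rule PiE_I)
        fix i assume i: "i \<in> I"
        show "(\<omega> \<circ> \<sigma>) i \<in> A i" using 1 inI[OF i] s1[OF i] by force
      next
        fix i assume "i \<notin> I"
        then show "(\<omega> \<circ> \<sigma>) i = undefined" using 2 out by (auto simp: extensional_def)
      qed
      moreover have "\<omega> \<in> space (PiM I (\<lambda>_. lborel::real measure))" using 2 by (simp add: space_PiM PiE_def)
      ultimately show "\<omega> \<in> (\<lambda>\<omega>. \<omega> \<circ> \<sigma>) -` Pi\<^sub>E I A \<inter> space (PiM I (\<lambda>_. lborel::real measure))" by simp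
    qed
    have AI: "Pi\<^sub>E I A \<in> sets (PiM I (\<lambda>_. lborel::real measure))" using A by (intro sets_PiM_I_finite fin) auto
    have "emeasure (distr (PiM I (\<lambda>_. lborel::real measure)) (PiM I (\<lambda>_. lborel)) (\<lambda>\<omega>. \<omega> \<circ> \<sigma>)) (Pi\<^sub>E I A)
        = emeasure (PiM I (\<lambda>_. lborel::real measure)) (Pi\<^sub>E I (\<lambda>k. A (?s k)))"
      by (subst emeasure_distr[OF meas AI]) (simp add: pre)
    also have "\<dots> = (\<Prod>k\<in>I. emeasure lborel (A (?s k)))"
      using A sI by (intro emeasure_PiM fin) auto
    also have "\<dots> = (\<Prod>i\<in>I. emeasure lborel (A i))"
    proof (rule prod.reindex_bij_witness[of _ \<sigma> ?s])
    qed (auto simp: s1 s2 sI inI)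
    finally show "emeasure (distr (PiM I (\<lambda>_. lborel::real measure)) (PiM I (\<lambda>_. lborel)) (\<lambda>\<omega>. \<omega> \<circ> \<sigma>)) (Pi\<^sub>E I A)
        = (\<Prod>i\<in>I. emeasure lborel (A i))" .
  qed
qed

definition sig :: "(nat \<Rightarrow> nat \<Rightarrow> nat) \<Rightarrow> widx \<Rightarrow> widx" where
  "sig \<tau> k = (case k of Wt l i j \<Rightarrow> Wt l (\<tau> l i) (\<tau> (l - 1) j) | Bs l i \<Rightarrow> Bs l (\<tau> l i))"

definition gmul :: "(nat \<Rightarrow> nat \<Rightarrow> nat) \<Rightarrow> (nat \<Rightarrow> nat \<Rightarrow> nat) \<Rightarrow> (nat \<Rightarrow> nat \<Rightarrow> nat)" where
  "gmul g h = (\<lambda>l. g l \<circ> h l)"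

lemma act_sig: "act \<tau> = (\<lambda>\<omega>. \<omega> \<circ> sig \<tau>)"
  by (auto simp: act_def sig_def fun_eq_iff split: widx.split)

lemma pg_bij: "\<tau> \<in> permgroup ds \<Longrightarrow> bij (\<tau> l)"
  unfolding permgroup_def by (cases "1 \<le> l \<and> l < length ds - 1") (auto intro: permutes_bij)

lemma pg_inv: "\<tau> \<in> permgroup ds \<Longrightarrow> ginv \<tau> \<in> permgroup ds"
  unfolding permgroup_def ginv_def by (auto intro: permutes_inv)

lemma pg_mul: "g \<in> permgroup ds \<Longrightarrow> h \<in> permgroup ds \<Longrightarrow> gmul g h \<in> permgroup ds"
  unfolding permgroup_def gmul_def by (auto intro: permutes_compose)

lemma pg_id: "(\<lambda>l. id) \<in> permgroup ds"
  unfolding permgroup_def by (auto intro: permutes_id)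

lemma pg_ne: "permgroup ds \<noteq> {}" using pg_id by blast

lemma pg_finite: "finite (permgroup ds)"
proof -
  let ?R = "{1..<length ds - 1}"
  let ?f = "\<lambda>\<tau>::nat \<Rightarrow> nat \<Rightarrow> nat. restrict \<tau> ?R"
  have inj: "inj_on ?f (permgroup ds)"
  proof (rule inj_onI)
    fix a b assume a: "a \<in> permgroup ds" and b: "b \<in> permgroup ds" and e: "?f a = ?f b"
    show "a = b"
    proof
      fix l show "a l = b l"
      proof (cases "l \<in> ?R")
        case True then show ?thesis using fun_cong[OF e, of l] by simp
      next
        case False then show ?thesis using a b unfolding permgroup_def by auto
      qed
    qed
  qed
  have "?f ` permgroup ds \<subseteq> PiE ?R (\<lambda>l. {p. p permutes {..<ds ! l}})"
    unfolding permgroup_def by auto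
  moreover have "finite (PiE ?R (\<lambda>l. {p. p permutes {..<ds ! l}}))"
    by (intro finite_PiE) (auto intro: finite_permutations)
  ultimately have "finite (?f ` permgroup ds)" by (rule finite_subset)
  then show ?thesis using inj by (rule finite_imageD)
qed

lemma pg_card_pos: "card (permgroup ds) > 0"
  using pg_finite pg_ne by (simp add: card_gt_0_iff)

lemma sig_comp: "sig b (sig a k) = sig (gmul b a) k"
  by (simp add: sig_def gmul_def split: widx.split)

lemma sig_id: "sig (\<lambda>l. id) k = k"
  by (simp add: sig_def split: widx.split)

lemma act_comp: "act a (act b \<omega>) = act (gmul b a) \<omega>"
  by (simp add: act_sig comp_def sig_comp)

lemma gmul_inv_left: "\<tau> \<in> permgroup ds \<Longrightarrow> gmul (ginv \<tau>) \<tau> = (\<lambda>l. id)"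
  unfolding gmul_def ginv_def using pg_bij by (auto simp: bij_def inv_o_cancel)

lemma gmul_inv_right: "\<tau> \<in> permgroup ds \<Longrightarrow> gmul \<tau> (ginv \<tau>) = (\<lambda>l. id)"
  unfolding gmul_def ginv_def using pg_bij by (auto simp: bij_def surj_iff)

lemma gmul_assoc: "gmul (gmul a b) c = gmul a (gmul b c)"
  by (simp add: gmul_def comp_assoc)

lemma gmul_id_right: "gmul a (\<lambda>l. id) = a"
  by (simp add: gmul_def)

lemma ginv_gmul: "g \<in> permgroup ds \<Longrightarrow> h \<in> permgroup ds \<Longrightarrow> ginv (gmul g h) = gmul (ginv h) (ginv g)"
  unfolding ginv_def gmul_def using pg_bij by (auto simp: o_inv_distrib)

lemma pg_lt: "\<tau> \<in> permgroup ds \<Longrightarrow> i < ds ! l \<Longrightarrow> \<tau> l i < ds ! l"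
  unfolding permgroup_def
  by (cases "1 \<le> l \<and> l < length ds - 1") (auto dest: permutes_in_image)

lemma sig_in: "\<tau> \<in> permgroup ds \<Longrightarrow> k \<in> wIdx ds \<Longrightarrow> sig \<tau> k \<in> wIdx ds"
  unfolding wIdx_def sig_def by (auto intro: pg_lt)

lemma sig_inv: "\<tau> \<in> permgroup ds \<Longrightarrow> sig (ginv \<tau>) (sig \<tau> k) = k"
  by (simp add: sig_comp gmul_inv_left sig_id)

lemma sig_inv2: "\<tau> \<in> permgroup ds \<Longrightarrow> sig \<tau> (sig (ginv \<tau>) k) = k"
  by (simp add: sig_comp gmul_inv_right sig_id)

lemma sig_bij: "\<tau> \<in> permgroup ds \<Longrightarrow> bij_betw (sig \<tau>) (wIdx ds) (wIdx ds)"
  by (rule bij_betw_byWitness[where f'="sig (ginv \<tau>)"])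
     (auto simp: sig_inv sig_inv2 intro: sig_in pg_inv)

lemma sig_out: "\<tau> \<in> permgroup ds \<Longrightarrow> k \<notin> wIdx ds \<Longrightarrow> sig \<tau> k \<notin> wIdx ds"
  by (metis sig_inv sig_in pg_inv)

lemma wIdx_finite: "finite (wIdx ds)"
proof -
  define M where "M = Max (set ds) + 1"
  have lt: "ds ! l < M" if "l < length ds" for l
    unfolding M_def using that by (simp add: le_imp_less_Suc)
  have "wIdx ds \<subseteq> (\<lambda>(l,i,j). Wt l i j) ` ({..<length ds} \<times> {..<M} \<times> {..<M}) \<union> (\<lambda>(l,i). Bs l i) ` ({..<length ds} \<times> {..<M})"
  proof
    fix k assume "k \<in> wIdx ds"
    then show "k \<in> (\<lambda>(l,i,j). Wt l i j) ` ({..<length ds} \<times> {..<M} \<times> {..<M}) \<union> (\<lambda>(l,i). Bs l i) ` ({..<length ds} \<times> {..<M})"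
      unfolding wIdx_def
    proof (elim UnE CollectE exE conjE)
      fix l i j assume *: "k = Wt l i j" "1 \<le> l" "l < length ds" "i < ds ! l" "j < ds ! (l - 1)"
      have "l - 1 < length ds" using * by simp
      then have "i < M" "j < M" using * lt[of l] lt[of "l-1"] by auto
      then show ?thesis using * by force
    next
      fix l i assume *: "k = Bs l i" "1 \<le> l" "l < length ds" "i < ds ! l"
      have "i < M" using * lt[of l] by auto
      then show ?thesis using * by force
    qed
  qed
  then show ?thesis by (rule finite_subset) auto
qed

lemma act_meas: "\<tau> \<in> permgroup ds \<Longrightarrow> act \<tau> \<in> wspace ds \<rightarrow>\<^sub>M wspace ds"
  unfolding act_sig wspace_def
  by (rule distr_reindex(1)[OF wIdx_finite sig_bij sig_out])

lemma act_distr: "\<tau> \<in> permgroup ds \<Longrightarrow> distr (wspace ds) (wspace ds) (act \<tau>) = wspace ds"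
  unfolding act_sig wspace_def
  by (rule distr_reindex(2)[OF wIdx_finite sig_bij sig_out])

lemma int_act:
  assumes t: "\<tau> \<in> permgroup ds" and f: "integrable (wspace ds) (f :: _ \<Rightarrow> real)"
  shows "integrable (wspace ds) (\<lambda>\<omega>. f (act \<tau> \<omega>))"
    and "(\<integral>\<omega>. f (act \<tau> \<omega>) \<partial>wspace ds) = (\<integral>\<omega>. f \<omega> \<partial>wspace ds)"
proof -
  have fm: "f \<in> borel_measurable (wspace ds)" using f by simp
  have f': "integrable (distr (wspace ds) (wspace ds) (act \<tau>)) f" using f act_distr[OF t] by simp
  show "integrable (wspace ds) (\<lambda>\<omega>. f (act \<tau> \<omega>))"
    using integrable_distr_eq[OF act_meas[OF t] fm] f' by simp
  show "(\<integral>\<omega>. f (act \<tau> \<omega>) \<partial>wspace ds) = (\<integral>\<omega>. f \<omega> \<partial>wspace ds)"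
    using integral_distr[OF act_meas[OF t] fm] act_distr[OF t] by simp
qed

lemma reindex_T:
  fixes F :: "(nat \<Rightarrow> nat \<Rightarrow> nat \<Rightarrow> nat) \<Rightarrow> real"
  assumes h: "h \<in> permgroup ds"
  shows "(\<Sum>gs\<in>gtuples ds K. F (restrict (\<lambda>j. gmul (gs j) h) {1..K-1})) = (\<Sum>gs\<in>gtuples ds K. F gs)"
proof (rule sum.reindex_bij_witness[where i="\<lambda>gs. restrict (\<lambda>j. gmul (gs j) (ginv h)) {1..K-1}"
                                      and j="\<lambda>gs. restrict (\<lambda>j. gmul (gs j) h) {1..K-1}"])
  fix a assume a: "a \<in> gtuples ds K"
  then show "restrict (\<lambda>j. gmul (restrict (\<lambda>j. gmul (a j) h) {1..K-1} j) (ginv h)) {1..K-1} = a"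
    using h by (auto simp: gtuples_def gmul_assoc gmul_inv_right gmul_id_right PiE_iff extensional_def fun_eq_iff)
  show "restrict (\<lambda>j. gmul (a j) h) {1..K-1} \<in> gtuples ds K"
    using a h by (auto simp: gtuples_def intro: pg_mul)
next
  fix b assume b: "b \<in> gtuples ds K"
  then show "restrict (\<lambda>j. gmul (restrict (\<lambda>j. gmul (b j) (ginv h)) {1..K-1} j) h) {1..K-1} = b"
    using h by (auto simp: gtuples_def gmul_assoc gmul_inv_left gmul_id_right PiE_iff extensional_def fun_eq_iff)
  show "restrict (\<lambda>j. gmul (b j) (ginv h)) {1..K-1} \<in> gtuples ds K"
    using b h by (auto simp: gtuples_def intro: pg_mul pg_inv)
qed simp

lemma hk_repr:
  assumes K: "K \<ge> 1"
    and fin: "\<forall>gs\<in>gtuples ds K. integrable (wspace ds) (\<lambda>\<omega>. q \<omega> * HK_integrand ds q K gs \<omega>)"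
  defines "\<Psi> \<equiv> \<lambda>\<omega>. \<Sum>h\<in>permgroup ds. \<Sum>gs\<in>gtuples ds K. q (act (ginv h) \<omega>) *
              - ln ((1 / real K) * (q (act (ginv h) \<omega>) + (\<Sum>j=1..K-1. q (act (ginv (gs j)) \<omega>))))"
  shows "integrable (wspace ds) \<Psi>"
    and "HK ds q K = (1 / (real (card (permgroup ds)) * real (card (gtuples ds K)))) * (\<integral>\<omega>. \<Psi> \<omega> \<partial>wspace ds)"
proof -
  let ?W = "wspace ds" and ?G = "permgroup ds" and ?T = "gtuples ds K"
  define F where "F = (\<lambda>gs \<omega>. q \<omega> * HK_integrand ds q K gs \<omega>)"
  define \<Phi> where "\<Phi> = (\<lambda>h gs \<omega>. F gs (act (ginv h) \<omega>))"
  have Fint: "integrable ?W (F gs)" if "gs \<in> ?T" for gs using fin that unfolding F_def by blast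
  have \<Phi>int: "integrable ?W (\<Phi> h gs)" and \<Phi>eq: "(\<integral>\<omega>. \<Phi> h gs \<omega> \<partial>?W) = (\<integral>\<omega>. F gs \<omega> \<partial>?W)"
    if "h \<in> ?G" "gs \<in> ?T" for h gs
    using int_act[OF pg_inv[OF that(1)] Fint[OF that(2)]] unfolding \<Phi>_def by auto
  have pw: "(\<Sum>gs\<in>?T. \<Phi> h gs \<omega>) = (\<Sum>gs\<in>?T. q (act (ginv h) \<omega>) *
              - ln ((1 / real K) * (q (act (ginv h) \<omega>) + (\<Sum>j=1..K-1. q (act (ginv (gs j)) \<omega>)))))"
    if h: "h \<in> ?G" for h \<omega>
  proof -
    let ?F' = "\<lambda>gs'. q (act (ginv h) \<omega>) *
              - ln ((1 / real K) * (q (act (ginv h) \<omega>) + (\<Sum>j=1..K-1. q (act (ginv (gs' j)) \<omega>))))"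
    have "\<Phi> h gs \<omega> = ?F' (restrict (\<lambda>j. gmul (gs j) h) {1..K-1})" if gs: "gs \<in> ?T" for gs
    proof -
      have "(\<Sum>j=1..K-1. q (act (ginv (gs j)) (act (ginv h) \<omega>)))
          = (\<Sum>j=1..K-1. q (act (ginv (restrict (\<lambda>j. gmul (gs j) h) {1..K-1} j)) \<omega>))"
      proof (rule sum.cong[OF refl])
        fix j assume j: "j \<in> {1..K-1}"
        then have "gs j \<in> ?G" using gs by (auto simp: gtuples_def)
        then show "q (act (ginv (gs j)) (act (ginv h) \<omega>)) = q (act (ginv (restrict (\<lambda>j. gmul (gs j) h) {1..K-1} j)) \<omega>)"
          using j h by (simp add: act_comp ginv_gmul)
      qed
      then show ?thesis unfolding \<Phi>_def F_def HK_integrand_def by simp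
    qed
    then have "(\<Sum>gs\<in>?T. \<Phi> h gs \<omega>) = (\<Sum>gs\<in>?T. ?F' (restrict (\<lambda>j. gmul (gs j) h) {1..K-1}))"
      by (rule sum.cong[OF refl])
    also have "\<dots> = (\<Sum>gs\<in>?T. ?F' gs)" by (rule reindex_T[OF h])
    finally show ?thesis .
  qed
  have \<Psi>eq: "\<Psi> = (\<lambda>\<omega>. \<Sum>h\<in>?G. \<Sum>gs\<in>?T. \<Phi> h gs \<omega>)"
    unfolding \<Psi>_def by (rule ext, rule sum.cong[OF refl], rule pw[symmetric])
  show \<Psi>int: "integrable ?W \<Psi>" unfolding \<Psi>eq
  proof (rule Bochner_Integration.integrable_sum)
    fix h assume h: "h \<in> ?G"
    show "integrable ?W (\<lambda>\<omega>. \<Sum>gs\<in>?T. \<Phi> h gs \<omega>)"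
      by (rule Bochner_Integration.integrable_sum) (rule \<Phi>int[OF h])
  qed
  have "(\<integral>\<omega>. \<Psi> \<omega> \<partial>?W) = (\<Sum>h\<in>?G. \<Sum>gs\<in>?T. (\<integral>\<omega>. \<Phi> h gs \<omega> \<partial>?W))"
    unfolding \<Psi>eq
  proof (subst Bochner_Integration.integral_sum)
    fix h assume h: "h \<in> ?G"
    show "integrable ?W (\<lambda>\<omega>. \<Sum>gs\<in>?T. \<Phi> h gs \<omega>)"
      by (rule Bochner_Integration.integrable_sum) (rule \<Phi>int[OF h])
  next
    show "(\<Sum>h\<in>?G. \<integral>\<omega>. (\<Sum>gs\<in>?T. \<Phi> h gs \<omega>) \<partial>?W) = (\<Sum>h\<in>?G. \<Sum>gs\<in>?T. (\<integral>\<omega>. \<Phi> h gs \<omega> \<partial>?W))"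
      by (rule sum.cong[OF refl], rule Bochner_Integration.integral_sum, rule \<Phi>int)
  qed
  also have "\<dots> = (\<Sum>h\<in>?G. \<Sum>gs\<in>?T. (\<integral>\<omega>. F gs \<omega> \<partial>?W))"
    by (intro sum.cong refl \<Phi>eq)
  also have "\<dots> = real (card ?G) * (\<Sum>gs\<in>?T. (\<integral>\<omega>. F gs \<omega> \<partial>?W))" by simp
  finally have I\<Psi>: "(\<integral>\<omega>. \<Psi> \<omega> \<partial>?W) = real (card ?G) * (\<Sum>gs\<in>?T. (\<integral>\<omega>. F gs \<omega> \<partial>?W))" .
  have "HK ds q K = (\<integral>\<omega>. (1 / real (card ?T)) * (\<Sum>gs\<in>?T. F gs \<omega>) \<partial>?W)"
    unfolding HK_def F_def by (rule Bochner_Integration.integral_cong[OF refl]) (simp add: sum_distrib_left algebra_simps)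
  also have "\<dots> = (1 / real (card ?T)) * (\<Sum>gs\<in>?T. (\<integral>\<omega>. F gs \<omega> \<partial>?W))"
    by (simp add: integral_sum Fint)
  also have "\<dots> = (1 / (real (card ?G) * real (card ?T))) * (\<integral>\<omega>. \<Psi> \<omega> \<partial>?W)"
    unfolding I\<Psi> using pg_card_pos[of ds] by simp
  finally show "HK ds q K = (1 / (real (card ?G) * real (card ?T))) * (\<integral>\<omega>. \<Psi> \<omega> \<partial>?W)" .
qed

theorem theorem4p3:
  fixes ds :: "nat list" and q :: "(widx \<Rightarrow> real) \<Rightarrow> real"
  assumes L: "length ds \<ge> 2"
    and widths: "\<forall>l < length ds. ds ! l \<ge> 1"
    and q_meas: "q \<in> borel_measurable (wspace ds)"
    and q_nonneg: "\<forall>\<omega>\<in>space (wspace ds). q \<omega> \<ge> 0"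
    and q_int: "integrable (wspace ds) q"
    and q_norm: "(\<integral>\<omega>. q \<omega> \<partial>wspace ds) = 1"
    and fin_HG: "integrable (wspace ds) (\<lambda>\<omega>. symdens ds q \<omega> * ln (symdens ds q \<omega>))"
    and fin_HK: "\<forall>K\<ge>1. \<forall>gs\<in>gtuples ds K.
                   integrable (wspace ds) (\<lambda>\<omega>. q \<omega> * HK_integrand ds q K gs \<omega>)"
  shows "(\<forall>K\<ge>1. HK ds q K \<le> diff_entropy (wspace ds) (symdens ds q))
         \<and> (\<lambda>K. HK ds q K) \<longlonglongrightarrow> diff_entropy (wspace ds) (symdens ds q)"
proof -
  let ?W = "wspace ds" and ?G = "permgroup ds"
  define n where "n = card ?G"
  define m where "m = symdens ds q"
  define H where "H = diff_entropy ?W m"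
  have npos: "real n > 0" unfolding n_def using pg_card_pos[of ds] by simp
  have H_eq: "H = - (\<integral>\<omega>. m \<omega> * ln (m \<omega>) \<partial>?W)" unfolding H_def diff_entropy_def ..
  have mlnm_int: "integrable ?W (\<lambda>\<omega>. m \<omega> * ln (m \<omega>))" using fin_HG unfolding m_def .
  have qa_int: "integrable ?W (\<lambda>\<omega>. q (act (ginv g) \<omega>))" and qa_eq: "(\<integral>\<omega>. q (act (ginv g) \<omega>) \<partial>?W) = 1"
    if "g \<in> ?G" for g
    using int_act[OF pg_inv[OF that] q_int] q_norm by auto
  have m_eq: "m = (\<lambda>\<omega>. (1 / real n) * (\<Sum>g\<in>?G. q (act (ginv g) \<omega>)))"
    unfolding m_def symdens_def n_def ..
  have m_int: "integrable ?W m" unfolding m_eq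
    by (intro Bochner_Integration.integrable_mult_right Bochner_Integration.integrable_sum qa_int)
  have m_one: "(\<integral>\<omega>. m \<omega> \<partial>?W) = 1"
  proof -
    have "(\<integral>\<omega>. m \<omega> \<partial>?W) = (1 / real n) * (\<Sum>g\<in>?G. (\<integral>\<omega>. q (act (ginv g) \<omega>) \<partial>?W))"
      unfolding m_eq by (simp add: Bochner_Integration.integral_sum qa_int)
    also have "\<dots> = 1" using npos by (simp add: qa_eq n_def)
    finally show ?thesis .
  qed
  have bounds: "H - ln (1 + real n / real K) \<le> HK ds q K \<and> HK ds q K \<le> H" if K: "K \<ge> 1" for K
  proof -
    let ?T = "gtuples ds K"
    define \<Psi> where "\<Psi> = (\<lambda>\<omega>. \<Sum>h\<in>permgroup ds. \<Sum>gs\<in>gtuples ds K. q (act (ginv h) \<omega>) *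
              - ln ((1 / real K) * (q (act (ginv h) \<omega>) + (\<Sum>j=1..K-1. q (act (ginv (gs j)) \<omega>)))))"
    have fin: "\<forall>gs\<in>gtuples ds K. integrable (wspace ds) (\<lambda>\<omega>. q \<omega> * HK_integrand ds q K gs \<omega>)"
      using fin_HK K by blast
    have \<Psi>int: "integrable ?W \<Psi>" unfolding \<Psi>_def by (rule hk_repr(1)[OF K fin])
    have HKeq: "HK ds q K = (1 / (real n * real (card ?T))) * (\<integral>\<omega>. \<Psi> \<omega> \<partial>?W)"
      unfolding \<Psi>_def n_def by (rule hk_repr(2)[OF K fin])
    have Tpos: "real (card ?T) > 0"
      unfolding gtuples_def using pg_finite[of ds] pg_ne[of ds]
      by (simp add: card_gt_0_iff finite_PiE PiE_eq_empty_iff)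
    define N where "N = real n * real (card ?T)"
    have Npos: "N > 0" unfolding N_def using npos Tpos by simp
    have pw: "\<Psi> \<omega> \<le> - N * (m \<omega> * ln (m \<omega>)) \<and>
              \<Psi> \<omega> \<ge> - N * (m \<omega> * ln (m \<omega>)) - N * m \<omega> * ln (1 + real n / real K)"
      if w: "\<omega> \<in> space ?W" for \<omega>
    proof -
      have pnn: "\<forall>g\<in>?G. (\<lambda>g. q (act (ginv g) \<omega>)) g \<ge> 0"
        using q_nonneg measurable_space[OF act_meas[OF pg_inv] w] by auto
      have mw: "m \<omega> = (\<Sum>g\<in>?G. q (act (ginv g) \<omega>)) / real (card ?G)"
        unfolding m_eq n_def by simp
      have TT: "gtuples ds K = PiE {1..K-1} (\<lambda>_. ?G)" unfolding gtuples_def ..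
      note cb = comb_bounds[OF pg_finite pg_ne pnn K]
      show ?thesis using cb unfolding \<Psi>_def N_def mw[symmetric] TT n_def by simp
    qed
    have up: "(\<integral>\<omega>. \<Psi> \<omega> \<partial>?W) \<le> (\<integral>\<omega>. - N * (m \<omega> * ln (m \<omega>)) \<partial>?W)"
      using pw by (intro integral_mono \<Psi>int Bochner_Integration.integrable_mult_right mlnm_int) auto
    have lo: "(\<integral>\<omega>. - N * (m \<omega> * ln (m \<omega>)) - N * ln (1 + real n / real K) * m \<omega> \<partial>?W) \<le> (\<integral>\<omega>. \<Psi> \<omega> \<partial>?W)"
      using pw by (intro integral_mono \<Psi>int Bochner_Integration.integrable_diff
            Bochner_Integration.integrable_mult_right mlnm_int m_int) (auto simp: algebra_simps)
    have i1: "(\<integral>\<omega>. - N * (m \<omega> * ln (m \<omega>)) \<partial>?W) = N * H"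
      unfolding H_eq by simp
    have i2: "(\<integral>\<omega>. - N * (m \<omega> * ln (m \<omega>)) - N * ln (1 + real n / real K) * m \<omega> \<partial>?W)
        = N * H - N * ln (1 + real n / real K)"
      using mlnm_int m_int m_one unfolding H_eq
      by (subst Bochner_Integration.integral_diff) (auto intro: Bochner_Integration.integrable_mult_right)
    have HK2: "HK ds q K = (\<integral>\<omega>. \<Psi> \<omega> \<partial>?W) / N" unfolding HKeq N_def by simp
    show ?thesis
    proof
      have "N * (H - ln (1 + real n / real K)) \<le> (\<integral>\<omega>. \<Psi> \<omega> \<partial>?W)" using lo i2 by (simp add: algebra_simps)
      then show "H - ln (1 + real n / real K) \<le> HK ds q K" unfolding HK2 using Npos by (simp add: field_simps)
      have "(\<integral>\<omega>. \<Psi> \<omega> \<partial>?W) \<le> N * H" using up i1 by simp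
      then show "HK ds q K \<le> H" unfolding HK2 using Npos by (simp add: field_simps)
    qed
  qed
  have lim0: "(\<lambda>K. ln (1 + real n / real K)) \<longlonglongrightarrow> 0"
  proof -
    have "(\<lambda>K. 1 + real n / real K) \<longlonglongrightarrow> 1 + 0"
      by (intro tendsto_add tendsto_const lim_const_over_n)
    then have "(\<lambda>K. ln (1 + real n / real K)) \<longlonglongrightarrow> ln (1 + 0)"
      by (intro tendsto_ln) auto
    then show ?thesis by simp
  qed
  have "(\<lambda>K. HK ds q K) \<longlonglongrightarrow> H"
  proof (rule tendsto_sandwich[where f="\<lambda>K. H - ln (1 + real n / real K)" and h="\<lambda>K. H"])
    show "\<forall>\<^sub>F K in sequentially. H - ln (1 + real n / real K) \<le> HK ds q K"
      using bounds by (intro eventually_sequentiallyI[of 1]) auto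
    show "\<forall>\<^sub>F K in sequentially. HK ds q K \<le> H"
      using bounds by (intro eventually_sequentiallyI[of 1]) auto
    show "(\<lambda>K. H - ln (1 + real n / real K)) \<longlonglongrightarrow> H"
      using tendsto_diff[OF tendsto_const lim0, of H] by simp
  qed simp
  then show ?thesis using bounds unfolding H_def m_def by auto
qed

end
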